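(* Let $K$ be a Kleene algebra and $x,u,v\in K$. If the inequation $y\ge (x+uyv)^*$ has a least solution $N$ in $K$, then \[ (u+x+v)^*=(Nv)^*N(uN)^*. \]
   Context: A Kleene algebra is an idempotent semiring $(K,+,\cdot,0,1)$ with a unary operation $^*$ such that for all $a,b$: $aa^*+1\le a^*$, $a^*a+1\le a^*$, and for all $x$, $ax+b\le x$ implies $a^*b\le x$, and $xa+b\le x$ implies $ba^*\le x$; here $a\le b$ iff $a+b=b$. No $*$-continuity is assumed. *)

theory Defs
  imports Main
begin

text \<open>Kleene algebra (Kozen's axiomatisation, no star-continuity): an idempotent
semiring (0 need not differ from 1) with natural order x \<le> y iff x + y = y,
and a star operation satisfying the unfold and induction axioms.\<close>

class kleene_algebra = semiring_0 + monoid_mult + ord +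
  fixes star :: "'a \<Rightarrow> 'a"
  assumes add_idem: "x + x = x"
  and less_eq_def: "x \<le> y \<longleftrightarrow> x + y = y"
  and less_def: "x < y \<longleftrightarrow> x \<le> y \<and> x \<noteq> y"
  and star_unfoldl: "a * star a + 1 \<le> star a"
  and star_unfoldr: "star a * a + 1 \<le> star a"
  and star_inductl: "a * x + b \<le> x \<Longrightarrow> star a * b \<le> x"
  and star_inductr: "x * a + b \<le> x \<Longrightarrow> b * star a \<le> x"

end

theory Submission
  imports Defs
begin

context kleene_algebra
begin

lemma ka_refl: "x \<le> x" by (simp add: less_eq_def add_idem)

lemma ka_antisym: "x \<le> y \<Longrightarrow> y \<le> x \<Longrightarrow> x = y"
  by (metis less_eq_def add.commute)

lemma ka_trans: "x \<le> y \<Longrightarrow> y \<le> z \<Longrightarrow> x \<le> z"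
  by (metis less_eq_def add.assoc)

subclass order
proof
  fix x y z :: 'a
  show "(x < y) = (x \<le> y \<and> \<not> y \<le> x)" using less_def ka_antisym ka_refl by blast
  show "x \<le> x" by (rule ka_refl)
  show "x \<le> y \<Longrightarrow> y \<le> z \<Longrightarrow> x \<le> z" by (rule ka_trans)
  show "x \<le> y \<Longrightarrow> y \<le> x \<Longrightarrow> x = y" by (rule ka_antisym)
qed

lemma add_lub: "(x + y \<le> z) = (x \<le> z \<and> y \<le> z)"
  by (metis less_eq_def add.assoc add.commute add.left_commute add_idem)

lemma add_ub1: "x \<le> x + y" by (metis less_eq_def add.assoc add_idem)
lemma add_ub2: "y \<le> x + y" by (metis add_ub1 add.commute)

lemma add_mono2: "x \<le> y \<Longrightarrow> z \<le> w \<Longrightarrow> x + z \<le> y + w"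
  by (meson add_lub add_ub1 add_ub2 order_trans)

lemma mult_monol: "x \<le> y \<Longrightarrow> z * x \<le> z * y"
  by (metis less_eq_def distrib_left)
lemma mult_monor: "x \<le> y \<Longrightarrow> x * z \<le> y * z"
  by (metis less_eq_def distrib_right)
lemma mult_mono2: "x \<le> y \<Longrightarrow> z \<le> w \<Longrightarrow> x * z \<le> y * w"
  by (meson mult_monol mult_monor order_trans)

lemma one_le_star: "1 \<le> star a" using star_unfoldl add_lub by blast
lemma a_star_le: "a * star a \<le> star a" using star_unfoldl add_lub by blast
lemma star_a_le: "star a * a \<le> star a" using star_unfoldr add_lub by blast
lemma le_star: "a \<le> star a"
proof -
  have "a * 1 \<le> a * star a" by (rule mult_monol[OF one_le_star])
  then show ?thesis using a_star_le order_trans by simp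
qed

lemma star_le_star: "a \<le> star b \<Longrightarrow> star a \<le> star b"
proof -
  assume h: "a \<le> star b"
  have "star b * star b \<le> star b"
    using star_inductl[of b "star b" "star b"] a_star_le by (simp add: add_lub)
  then have "a * star b + 1 \<le> star b"
    using mult_monor[OF h, of "star b"] one_le_star add_lub order_trans by blast
  then show ?thesis using star_inductl[of a "star b" 1] by simp
qed

lemma star_star_le: "star a * star a \<le> star a"
  using star_inductl[of a "star a" "star a"] a_star_le by (simp add: add_lub)

lemma star_mono2: "a \<le> b \<Longrightarrow> star a \<le> star b"
  using star_le_star le_star order_trans by blast

lemma star_unfold_le: "star a \<le> 1 + a * star a"
proof -
  have "a * (1 + a * star a) + 1 \<le> 1 + a * star a"
  proof -
    have "a * (a * star a) \<le> a * star a" by (rule mult_monol[OF a_star_le])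
    moreover have "a \<le> a * star a" using mult_monol[OF one_le_star, of a] by simp
    ultimately have "a + a * (a * star a) \<le> a * star a" by (simp add: add_lub)
    then have "a + a * (a * star a) + 1 \<le> a * star a + 1" by (rule add_mono2) simp
    then show ?thesis by (simp add: distrib_left add.commute)
  qed
  then show ?thesis using star_inductl[of a "1 + a * star a" 1] by simp
qed

end

theorem theorem6:
  fixes x u v N :: "'a::kleene_algebra"
  assumes "star (x + u * N * v) \<le> N"
    and "\<And>y. star (x + u * y * v) \<le> y \<Longrightarrow> N \<le> y"
  shows "star (u + x + v) = star (N * v) * N * star (u * N)"
proof -
  have a1: "star (x + u * N * v) \<le> N" by fact
  have mn: "N \<le> star (x + u * N * v)"
  proof (rule assms(2))
    have "x + u * star (x + u * N * v) * v \<le> x + u * N * v"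
      by (rule add_mono2[OF order_refl mult_monor[OF mult_monol[OF a1]]])
    then show "star (x + u * star (x + u * N * v) * v) \<le> star (x + u * N * v)"
      by (rule star_mono2)
  qed
  then have NN: "N = star (x + u * N * v)" using a1 by auto
  have N1: "1 \<le> N" using NN one_le_star by metis
  have Nx: "x \<le> N" using NN le_star add_lub order_trans by metis
  have Nuv: "u * N * v \<le> N" using NN le_star add_lub order_trans by metis
  have NNN: "N * N \<le> N" using NN star_star_le by metis
  define S where "S = star (u + x + v)"
  define R where "R = star (N * v) * N * star (u * N)"
  have uS: "u \<le> S" "x \<le> S" "v \<le> S" unfolding S_def using le_star add_lub order_trans by metis+
  have SS: "S * S \<le> S" unfolding S_def by (rule star_star_le)
  have NS: "N \<le> S"
  proof (rule assms(2))
    have "u * S * v \<le> S"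
      using mult_mono2[OF mult_mono2[OF uS(1) order_refl] uS(3)] SS mult_monor[OF SS, of S]
      by (meson order_trans)
    then have "x + u * S * v \<le> S" using uS add_lub by blast
    then show "star (x + u * S * v) \<le> S" unfolding S_def by (rule star_le_star)
  qed
  have RS: "R \<le> S"
  proof -
    have "star (N * v) \<le> S" unfolding S_def
      by (rule star_le_star) (metis S_def SS NS uS(3) mult_mono2 order_trans)
    moreover have "star (u * N) \<le> S" unfolding S_def
      by (rule star_le_star) (metis S_def SS NS uS(1) mult_mono2 order_trans)
    ultimately show ?thesis unfolding R_def
      using mult_mono2[OF mult_mono2[OF _ NS] ] SS mult_monor[OF SS]
      by (meson order_trans)
  qed
  define P where "P = star (N * v) * N"
  have NP: "N * star (N * v) \<le> P"
  proof -
    have "P * (N * v) + N \<le> P"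
    proof -
      have "P * (N * v) = star (N * v) * (N * N) * v" unfolding P_def by (simp add: mult.assoc)
      also have "\<dots> \<le> star (N * v) * N * v" using mult_monor[OF mult_monol[OF NNN, of "star (N * v)"], of v] by simp
      also have "\<dots> \<le> star (N * v)" using star_a_le by (simp add: mult.assoc)
      also have "\<dots> \<le> P" unfolding P_def using mult_monol[OF N1, of "star (N * v)"] by simp
      finally have 1: "P * (N * v) \<le> P" .
      have "N \<le> P" unfolding P_def using mult_monor[OF one_le_star, of N] by simp
      with 1 show ?thesis using add_lub by blast
    qed
    then show ?thesis using star_inductr[of P "N * v" N] by simp
  qed
  have NPN: "N * P \<le> P"
  proof -
    have "N * P \<le> P * N" using mult_monor[OF NP, of N] unfolding P_def by (simp add: mult.assoc)
    also have "\<dots> \<le> P" unfolding P_def using mult_monol[OF NNN] by (simp add: mult.assoc)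
    finally show ?thesis .
  qed
  have P1: "1 \<le> P" unfolding P_def using mult_mono2[OF one_le_star N1] by simp
  have RP: "R = P * star (u * N)" unfolding R_def P_def by simp
  have starR: "star (u * N) \<le> R" unfolding RP using mult_monor[OF P1] by simp
  have R1: "1 \<le> R" using starR one_le_star order_trans by blast
  have uR: "u * R \<le> R"
  proof -
    have "u * P \<le> u * (1 + N * v * star (N * v)) * N"
      unfolding P_def using mult_monol[OF mult_monor[OF star_unfold_le[of "N * v"], of N], of u] by (simp add: mult.assoc)
    also have "\<dots> = u * N + (u * N * v) * (star (N * v) * N)"
      by (simp add: distrib_left distrib_right mult.assoc)
    also have "\<dots> \<le> u * N + N * P"
      unfolding P_def by (rule add_mono2[OF order_refl mult_monor[OF Nuv]])
    also have "\<dots> \<le> u * N + P" using add_mono2[OF order_refl NPN] .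
    finally have 1: "u * P \<le> u * N + P" .
    have "u * R \<le> (u * N + P) * star (u * N)" unfolding RP
      using mult_monol[OF 1, of u] by (simp only: mult.assoc[symmetric] mult_monor[OF 1])
    also have "\<dots> = u * N * star (u * N) + R" unfolding RP by (simp add: distrib_right)
    also have "\<dots> \<le> R"
    proof -
      have "u * N * star (u * N) \<le> R" using a_star_le[of "u * N"] starR by (rule order_trans)
      then show ?thesis by (simp add: add_lub)
    qed
    finally show ?thesis .
  qed
  have xR: "x * R \<le> R"
  proof -
    have "x * P \<le> N * P" by (rule mult_monor[OF Nx])
    then have "x * P \<le> P" using NPN by simp
    then have "x * P * star (u * N) \<le> P * star (u * N)" by (rule mult_monor)
    then show ?thesis unfolding RP by (simp add: mult.assoc)
  qed
  have vR: "v * R \<le> R"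
  proof -
    have "v \<le> N * v" using mult_monor[OF N1] by simp
    then have "v * star (N * v) \<le> N * v * star (N * v)" by (rule mult_monor)
    then have "v * star (N * v) \<le> star (N * v)" using a_star_le[of "N * v"] by (simp add: mult.assoc)
    then have "v * star (N * v) * (N * star (u * N)) \<le> star (N * v) * (N * star (u * N))" by (rule mult_monor)
    then show ?thesis unfolding R_def by (simp add: mult.assoc)
  qed
  have "(u + x + v) * R + 1 \<le> R" using uR xR vR R1
    by (simp add: distrib_right add_lub)
  then have "S \<le> R" unfolding S_def using star_inductl[of "u + x + v" R 1] by simp
  then show ?thesis using RS unfolding S_def R_def by auto
qed

end
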